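(* Let $\Pi$ be a projective plane of order $q^2$ and let $\pi$ be a Baer subplane of $\Pi$. Then for any embedding $\phi$ of the complete bipartite graph $K_{q^2,q^2}$ into $\Pi$, the set of image points $\phi(V(K_{q^2,q^2}))$ contains at most (a) $q^2$ points of $\pi$, if $q>2$; (b) $q^2+1$ points of $\pi$, if $q=2$.
   Context: A finite projective plane of order $Q$ has $Q^2+Q+1$ points and lines, $Q+1$ points on each line and $Q+1$ lines through each point; any two distinct points lie on a unique line and any two lines meet in a unique point. A subplane of $\Pi$ is a set of points and lines of $\Pi$ forming a projective plane under the inherited incidence; a Baer subplane of a plane of order $q^2$ is a subplane of order $q$. An embedding of a simple graph $G=(V,E)$ into $\Pi$ is an injective map $\phi$ from $V$ to the points of $\Pi$ such that the induced map sending an edge $ab$ to the line through $\phi(a),\phi(b)$ is injective on $E$. *)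

theory Defs
  imports Main
begin

definition proj_plane :: "'p set \<Rightarrow> 'l set \<Rightarrow> ('p \<Rightarrow> 'l \<Rightarrow> bool) \<Rightarrow> nat \<Rightarrow> bool" where
  "proj_plane P L I Q \<longleftrightarrow>
     finite P \<and> finite L \<and>
     card P = Q^2 + Q + 1 \<and> card L = Q^2 + Q + 1 \<and>
     (\<forall>l\<in>L. card {p\<in>P. I p l} = Q + 1) \<and>
     (\<forall>p\<in>P. card {l\<in>L. I p l} = Q + 1) \<and>
     (\<forall>p\<in>P. \<forall>r\<in>P. p \<noteq> r \<longrightarrow> (\<exists>!l. l \<in> L \<and> I p l \<and> I r l)) \<and>
     (\<forall>l\<in>L. \<forall>m\<in>L. l \<noteq> m \<longrightarrow> (\<exists>!p. p \<in> P \<and> I p l \<and> I p m))"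

text \<open>A subplane: points and lines of the plane forming a projective plane (of some order)
  under the inherited incidence.  A Baer subplane of a plane of order q^2 is one of order q.\<close>
definition baer_subplane ::
  "'p set \<Rightarrow> 'l set \<Rightarrow> ('p \<Rightarrow> 'l \<Rightarrow> bool) \<Rightarrow> nat \<Rightarrow> 'p set \<Rightarrow> 'l set \<Rightarrow> bool" where
  "baer_subplane P L I q P' L' \<longleftrightarrow> P' \<subseteq> P \<and> L' \<subseteq> L \<and> proj_plane P' L' I q"

definition line_through :: "'l set \<Rightarrow> ('p \<Rightarrow> 'l \<Rightarrow> bool) \<Rightarrow> 'p \<Rightarrow> 'p \<Rightarrow> 'l" where
  "line_through L I p r = (THE l. l \<in> L \<and> I p l \<and> I r l)"

definition graph_embedding ::
  "'p set \<Rightarrow> 'l set \<Rightarrow> ('p \<Rightarrow> 'l \<Rightarrow> bool) \<Rightarrow> 'v set \<Rightarrow> 'v set set \<Rightarrow> ('v \<Rightarrow> 'p) \<Rightarrow> bool" where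
  "graph_embedding P L I V E \<phi> \<longleftrightarrow>
     inj_on \<phi> V \<and> \<phi> ` V \<subseteq> P \<and>
     (\<forall>a b c d. {a, b} \<in> E \<longrightarrow> {c, d} \<in> E \<longrightarrow>
        line_through L I (\<phi> a) (\<phi> b) = line_through L I (\<phi> c) (\<phi> d) \<longrightarrow> {a, b} = {c, d})"

definition Kbip_V :: "nat \<Rightarrow> (nat + nat) set" where
  "Kbip_V n = Inl ` {..<n} \<union> Inr ` {..<n}"

definition Kbip_E :: "nat \<Rightarrow> (nat + nat) set set" where
  "Kbip_E n = {{Inl i, Inr j} | i j. i < n \<and> j < n}"

end

theory Submission
  imports Defs
begin

lemma lt_sub:
  assumes pp: "proj_plane P L I Q" and bs: "baer_subplane P L I q P' L'"
    and a: "a \<in> P'" and b: "b \<in> P'" and ab: "a \<noteq> b"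
  shows "line_through L I a b \<in> L' \<and> I a (line_through L I a b) \<and> I b (line_through L I a b)"
proof -
  have sub: "P' \<subseteq> P" "L' \<subseteq> L" and pp': "proj_plane P' L' I q"
    using bs unfolding baer_subplane_def by auto
  have u': "\<forall>p\<in>P'. \<forall>r\<in>P'. p \<noteq> r \<longrightarrow> (\<exists>!l. l \<in> L' \<and> I p l \<and> I r l)"
    using pp' unfolding proj_plane_def by (elim conjE)
  have u: "\<forall>p\<in>P. \<forall>r\<in>P. p \<noteq> r \<longrightarrow> (\<exists>!l. l \<in> L \<and> I p l \<and> I r l)"
    using pp unfolding proj_plane_def by (elim conjE)
  have "\<exists>!l. l \<in> L' \<and> I a l \<and> I b l" using u' a b ab by blast
  then obtain l where l: "l \<in> L'" "I a l" "I b l" by blast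
  have "a \<in> P" "b \<in> P" using a b sub by auto
  then have uq: "\<exists>!l. l \<in> L \<and> I a l \<and> I b l" using u ab by blast
  have lL: "l \<in> L \<and> I a l \<and> I b l" using l sub by blast
  have "line_through L I a b = l"
    unfolding line_through_def by (rule the1_equality[OF uq lL])
  then show ?thesis using l by simp
qed

theorem lemma4p9:
  fixes P :: "'p set" and L :: "'l set" and I :: "'p \<Rightarrow> 'l \<Rightarrow> bool"
    and q :: nat and P' :: "'p set" and L' :: "'l set" and \<phi> :: "nat + nat \<Rightarrow> 'p"
  assumes "q \<ge> 2"
    and "proj_plane P L I (q^2)"
    and "baer_subplane P L I q P' L'"
    and "graph_embedding P L I (Kbip_V (q^2)) (Kbip_E (q^2)) \<phi>"
  shows "(q > 2 \<longrightarrow> card (\<phi> ` Kbip_V (q^2) \<inter> P') \<le> q^2)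
       \<and> (q = 2 \<longrightarrow> card (\<phi> ` Kbip_V (q^2) \<inter> P') \<le> q^2 + 1)"
proof -
  define n where "n = q^2"
  define X where "X = {i. i < n \<and> \<phi> (Inl i) \<in> P'}"
  define Y where "Y = {j. j < n \<and> \<phi> (Inr j) \<in> P'}"
  have pp': "proj_plane P' L' I q" and subL: "L' \<subseteq> L"
    using assms(3) unfolding baer_subplane_def by auto
  have finL': "finite L'" and cL': "card L' = q^2 + q + 1"
    and cpt: "\<And>p. p \<in> P' \<Longrightarrow> card {l\<in>L'. I p l} = q + 1"
    using pp' unfolding proj_plane_def by auto
  have inj: "inj_on \<phi> (Kbip_V n)"
    using assms(4) unfolding graph_embedding_def n_def by auto
  have edge: "\<And>a b c d. {a, b} \<in> Kbip_E n \<Longrightarrow> {c, d} \<in> Kbip_E n \<Longrightarrow>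
        line_through L I (\<phi> a) (\<phi> b) = line_through L I (\<phi> c) (\<phi> d) \<Longrightarrow> {a, b} = {c, d}"
    using assms(4) unfolding graph_embedding_def n_def by blast
  have inE: "\<And>i j. i < n \<Longrightarrow> j < n \<Longrightarrow> {Inl i, Inr j} \<in> Kbip_E n"
    unfolding Kbip_E_def by blast
  have neq: "\<And>i j. i < n \<Longrightarrow> j < n \<Longrightarrow> \<phi> (Inl i) \<noteq> \<phi> (Inr j)"
    using inj unfolding Kbip_V_def inj_on_def by blast
  have finX: "finite X" and finY: "finite Y" unfolding X_def Y_def by auto
  have eqset: "\<phi> ` Kbip_V n \<inter> P' = \<phi> ` (Inl ` X \<union> Inr ` Y)"
    unfolding Kbip_V_def X_def Y_def by auto
  have subV: "Inl ` X \<union> Inr ` Y \<subseteq> Kbip_V n"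
    unfolding Kbip_V_def X_def Y_def by auto
  have card_eq: "card (\<phi> ` Kbip_V n \<inter> P') = card X + card Y"
  proof -
    have "card (\<phi> ` (Inl ` X \<union> Inr ` Y)) = card (Inl ` X \<union> Inr ` Y)"
      using card_image inj_on_subset[OF inj subV] by blast
    also have "\<dots> = card X + card Y"
      using finX finY by (subst card_Un_disjoint) (auto simp: card_image)
    finally show ?thesis using eqset by simp
  qed
  have Xs: "X \<subseteq> {..<n}" and Ys: "Y \<subseteq> {..<n}" unfolding X_def Y_def by auto
  have Xn: "card X \<le> n"
    using card_mono[OF finite_lessThan Xs] by simp
  have Yn: "card Y \<le> n"
    using card_mono[OF finite_lessThan Ys] by simp
  have lt: "\<And>i j. i \<in> X \<Longrightarrow> j \<in> Y \<Longrightarrow>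
      line_through L I (\<phi> (Inl i)) (\<phi> (Inr j)) \<in> L' \<and>
      I (\<phi> (Inl i)) (line_through L I (\<phi> (Inl i)) (\<phi> (Inr j))) \<and>
      I (\<phi> (Inr j)) (line_through L I (\<phi> (Inl i)) (\<phi> (Inr j)))"
  proof -
    fix i j assume h: "i \<in> X" "j \<in> Y"
    then have "\<phi> (Inl i) \<in> P'" "\<phi> (Inr j) \<in> P'" "\<phi> (Inl i) \<noteq> \<phi> (Inr j)"
      using neq unfolding X_def Y_def by auto
    then show "?thesis i j" by (rule lt_sub[OF assms(2) assms(3)])
  qed
  have linj: "\<And>i j i' j'. i \<in> X \<Longrightarrow> j \<in> Y \<Longrightarrow> i' \<in> X \<Longrightarrow> j' \<in> Y \<Longrightarrow>
     line_through L I (\<phi> (Inl i)) (\<phi> (Inr j)) = line_through L I (\<phi> (Inl i')) (\<phi> (Inr j'))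
     \<Longrightarrow> i = i' \<and> j = j'"
  proof -
    fix i j i' j' assume h: "i \<in> X" "j \<in> Y" "i' \<in> X" "j' \<in> Y"
      "line_through L I (\<phi> (Inl i)) (\<phi> (Inr j)) = line_through L I (\<phi> (Inl i')) (\<phi> (Inr j'))"
    have "{Inl i, Inr j} = {Inl i', Inr j'}"
      using edge[OF inE inE h(5)] h unfolding X_def Y_def by auto
    then show "i = i' \<and> j = j'" by (auto simp: doubleton_eq_iff)
  qed
  have Ybound: "X \<noteq> {} \<Longrightarrow> card Y \<le> q + 1"
  proof -
    assume "X \<noteq> {}" then obtain i where i: "i \<in> X" by auto
    have "card Y \<le> card {l\<in>L'. I (\<phi> (Inl i)) l}"
    proof (rule card_inj_on_le[where f="\<lambda>j. line_through L I (\<phi> (Inl i)) (\<phi> (Inr j))"])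
      show "inj_on (\<lambda>j. line_through L I (\<phi> (Inl i)) (\<phi> (Inr j))) Y"
        unfolding inj_on_def using linj[OF i _ i] by blast
      show "(\<lambda>j. line_through L I (\<phi> (Inl i)) (\<phi> (Inr j))) ` Y \<subseteq> {l\<in>L'. I (\<phi> (Inl i)) l}"
        using lt[OF i] by blast
      show "finite {l\<in>L'. I (\<phi> (Inl i)) l}" using finL' by simp
    qed
    also have "\<dots> = q + 1" using cpt i unfolding X_def by auto
    finally show ?thesis .
  qed
  have Xbound: "Y \<noteq> {} \<Longrightarrow> card X \<le> q + 1"
  proof -
    assume "Y \<noteq> {}" then obtain j where j: "j \<in> Y" by auto
    have "card X \<le> card {l\<in>L'. I (\<phi> (Inr j)) l}"
    proof (rule card_inj_on_le[where f="\<lambda>i. line_through L I (\<phi> (Inl i)) (\<phi> (Inr j))"])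
      show "inj_on (\<lambda>i. line_through L I (\<phi> (Inl i)) (\<phi> (Inr j))) X"
        unfolding inj_on_def using linj[OF _ j _ j] by blast
      show "(\<lambda>i. line_through L I (\<phi> (Inl i)) (\<phi> (Inr j))) ` X \<subseteq> {l\<in>L'. I (\<phi> (Inr j)) l}"
        using lt[OF _ j] by blast
      show "finite {l\<in>L'. I (\<phi> (Inr j)) l}" using finL' by simp
    qed
    also have "\<dots> = q + 1" using cpt j unfolding Y_def by auto
    finally show ?thesis .
  qed
  have prod: "card X * card Y \<le> q^2 + q + 1"
  proof -
    have "card (X \<times> Y) \<le> card L'"
    proof (rule card_inj_on_le[where f="\<lambda>(i,j). line_through L I (\<phi> (Inl i)) (\<phi> (Inr j))"])
      show "inj_on (\<lambda>(i,j). line_through L I (\<phi> (Inl i)) (\<phi> (Inr j))) (X \<times> Y)"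
      proof (rule inj_onI)
        fix u v assume uv: "u \<in> X \<times> Y" "v \<in> X \<times> Y"
          "(\<lambda>(i,j). line_through L I (\<phi> (Inl i)) (\<phi> (Inr j))) u = (\<lambda>(i,j). line_through L I (\<phi> (Inl i)) (\<phi> (Inr j))) v"
        obtain i j where u: "u = (i, j)" by (cases u)
        obtain i' j' where v: "v = (i', j')" by (cases v)
        have "i \<in> X" "j \<in> Y" "i' \<in> X" "j' \<in> Y" using uv(1,2) u v by auto
        moreover have "line_through L I (\<phi> (Inl i)) (\<phi> (Inr j)) = line_through L I (\<phi> (Inl i')) (\<phi> (Inr j'))"
          using uv(3) u v by simp
        ultimately have "i = i' \<and> j = j'" by (rule linj)
        then show "u = v" using u v by simp
      qed
      show "(\<lambda>(i,j). line_through L I (\<phi> (Inl i)) (\<phi> (Inr j))) ` (X \<times> Y) \<subseteq> L'"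
      proof
        fix l assume "l \<in> (\<lambda>(i,j). line_through L I (\<phi> (Inl i)) (\<phi> (Inr j))) ` (X \<times> Y)"
        then obtain i j where "i \<in> X" "j \<in> Y" "l = line_through L I (\<phi> (Inl i)) (\<phi> (Inr j))" by auto
        then show "l \<in> L'" using lt by blast
      qed
    qed (rule finL')
    then show ?thesis using cL' by (simp add: card_cartesian_product)
  qed
  have ce: "card (\<phi> ` Kbip_V (q^2) \<inter> P') = card X + card Y"
    using card_eq unfolding n_def .
  have nq: "n = q^2" by (rule n_def)
  have main: "(q > 2 \<longrightarrow> card X + card Y \<le> q^2) \<and> (q = 2 \<longrightarrow> card X + card Y \<le> q^2 + 1)"
  proof (cases "X = {} \<or> Y = {}")
    case True
    then have "card X + card Y \<le> n" using Xn Yn by auto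
    then show ?thesis unfolding nq by (intro conjI impI) linarith+
  next
    case False
    then have xb: "card X \<le> q + 1" and yb: "card Y \<le> q + 1" using Xbound Ybound by auto
    show ?thesis
    proof (intro conjI impI)
      assume "q > 2"
      then have "q * q \<ge> 3 * q" by (intro mult_le_mono1) simp
      then have "2*q + 2 \<le> q^2" using \<open>q > 2\<close> unfolding power2_eq_square by linarith
      then show "card X + card Y \<le> q^2"
        using xb yb by linarith
    next
      assume q2: "q = 2"
      have "card X + card Y \<le> 5"
      proof (rule ccontr)
        assume "\<not> ?thesis"
        then have "card X = 3 \<and> card Y = 3" using xb yb q2 by linarith
        then show False using prod q2 by simp
      qed
      then show "card X + card Y \<le> q^2 + 1"
        using q2 by simp
    qed
  qed
  then show ?thesis unfolding ce .
qed

end
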